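(* Let $(X,d)$ be a compact metric space, $\mathbb{F}=\{f_n:n\in\mathbb{N}\}$ a sequence of continuous surjective self-maps of $X$, and $k\in\mathbb{N}$. If $(X,\mathbb{F})$ is weakly mixing (resp. topologically mixing) then $(X,\mathbb{F}_k)$ is weakly mixing (resp. topologically mixing). If the family $\mathbb{F}$ is feeble open, then $(X,\mathbb{F}_k)$ weakly mixing (resp. topologically mixing) implies $(X,\mathbb{F})$ weakly mixing (resp. topologically mixing).
   Context: Write $\omega_n=f_n\circ\cdots\circ f_1$ and, for $n>k$, $\omega^k_n=f_n\circ\cdots\circ f_{k+1}$; $\mathbb{F}_k=\{f_n:n\ge k+1\}$ is the truncated family, whose $n$-th composition ($n>k$) is $\omega^k_n$. $(X,\mathbb{F})$ is weakly mixing if for any non-empty open $U_1,U_2,V_1,V_2\subseteq X$ there is $n\in\mathbb{N}$ with $\omega_n(U_i)\cap V_i\neq\emptyset$ for $i=1,2$. $(X,\mathbb{F})$ is topologically mixing if for every pair of non-empty open $U,V$ there is $K$ with $\omega_n(U)\cap V\neq\emptyset$ for all $n\ge K$. The same notions for $(X,\mathbb{F}_k)$ use $\omega^k_n$ in place of $\omega_n$. $\mathbb{F}$ is feeble open if for every non-empty open $U$ and every $f\in\mathbb{F}$, $f(U)$ has non-empty interior. *)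

theory Defs
  imports "HOL-Analysis.Analysis"
begin

text \<open>Maps are indexed from 1: f 1, f 2, ...  (f 0 is never used).
  omega f k n = f n o ... o f (k+1) for n > k (identity otherwise);
  omega f 0 n is the n-th composition of the family.\<close>

fun omega :: "(nat \<Rightarrow> 'a \<Rightarrow> 'a) \<Rightarrow> nat \<Rightarrow> nat \<Rightarrow> 'a \<Rightarrow> 'a" where
  "omega f k 0 = id"
| "omega f k (Suc n) = (if Suc n \<le> k then id else f (Suc n) \<circ> omega f k n)"

text \<open>Weak mixing of the truncated family F_k = {f n : n >= k+1} on X
  (k = 0 gives the family F itself). Open means open in X.\<close>
definition weakly_mixing_from :: "'a::metric_space set \<Rightarrow> (nat \<Rightarrow> 'a \<Rightarrow> 'a) \<Rightarrow> nat \<Rightarrow> bool" where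
  "weakly_mixing_from X f k \<longleftrightarrow>
    (\<forall>U1 U2 V1 V2.
       openin (top_of_set X) U1 \<and> U1 \<noteq> {} \<and> openin (top_of_set X) U2 \<and> U2 \<noteq> {} \<and>
       openin (top_of_set X) V1 \<and> V1 \<noteq> {} \<and> openin (top_of_set X) V2 \<and> V2 \<noteq> {} \<longrightarrow>
       (\<exists>n>k. omega f k n ` U1 \<inter> V1 \<noteq> {} \<and> omega f k n ` U2 \<inter> V2 \<noteq> {}))"

definition topologically_mixing_from :: "'a::metric_space set \<Rightarrow> (nat \<Rightarrow> 'a \<Rightarrow> 'a) \<Rightarrow> nat \<Rightarrow> bool" where
  "topologically_mixing_from X f k \<longleftrightarrow>
    (\<forall>U V. openin (top_of_set X) U \<and> U \<noteq> {} \<and> openin (top_of_set X) V \<and> V \<noteq> {} \<longrightarrow>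
       (\<exists>K. \<forall>n\<ge>K. n > k \<longrightarrow> omega f k n ` U \<inter> V \<noteq> {}))"

definition feeble_open :: "'a::metric_space set \<Rightarrow> (nat \<Rightarrow> 'a \<Rightarrow> 'a) \<Rightarrow> bool" where
  "feeble_open X f \<longleftrightarrow>
    (\<forall>U n. openin (top_of_set X) U \<and> U \<noteq> {} \<and> n \<ge> 1 \<longrightarrow>
       (top_of_set X) interior_of (f n ` U) \<noteq> {})"

end

theory Submission
  imports Defs
begin

lemma omega_id: "n \<le> k \<Longrightarrow> omega f k n = id"
  by (induction n) auto

lemma omega_split: "k \<le> n \<Longrightarrow> omega f 0 n = omega f k n \<circ> omega f 0 k"
proof (induction n)
  case 0 then show ?case by simp
next
  case (Suc n)
  show ?case
  proof (cases "k = Suc n")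
    case True then show ?thesis by (simp add: omega_id)
  next
    case False
    then have "k \<le> n" using Suc.prems by simp
    then show ?thesis using Suc.IH False by (simp add: comp_assoc)
  qed
qed

lemma omega_props:
  assumes "\<And>n. n \<ge> 1 \<Longrightarrow> continuous_on X (f n)"
    and "\<And>n. n \<ge> 1 \<Longrightarrow> f n ` X = X"
  shows "continuous_on X (omega f k n) \<and> omega f k n ` X = X"
proof (induction n)
  case 0 then show ?case by simp
next
  case (Suc n)
  show ?case
  proof (cases "Suc n \<le> k")
    case True then show ?thesis by simp
  next
    case False
    have c: "continuous_on X (f (Suc n))" "f (Suc n) ` X = X" using assms by auto
    have "continuous_on X (f (Suc n) \<circ> omega f k n)"
      using Suc.IH c by (intro continuous_on_compose) auto
    moreover have "(f (Suc n) \<circ> omega f k n) ` X = X"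
      using Suc.IH c by (metis image_comp)
    ultimately show ?thesis using False by simp
  qed
qed

lemma shrink:
  fixes X :: "'a::metric_space set"
  assumes g: "continuous_on X g" "g ` X \<subseteq> X"
    and U: "openin (top_of_set X) U" "U \<noteq> {}"
    and V: "openin (top_of_set X) V" "V \<noteq> {}" "\<And>q. V \<noteq> {q}"
  obtains U' V' where "openin (top_of_set X) U'" "U' \<noteq> {}" "U' \<subseteq> U"
    "openin (top_of_set X) V'" "V' \<noteq> {}" "V' \<subseteq> V" "g ` U' \<inter> V' = {}"
proof -
  obtain x where x: "x \<in> U" using U by auto
  obtain y where y: "y \<in> V" "y \<noteq> g x" using V(2) V(3)[of "g x"] by blast
  obtain A B where AB: "open A" "open B" "g x \<in> A" "y \<in> B" "A \<inter> B = {}"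
    using separation_t2[of "g x" y] y by metis
  have UX: "U \<subseteq> X" using U openin_imp_subset by blast
  have VX: "V \<subseteq> X" using V openin_imp_subset by blast
  have o1: "openin (top_of_set X) (U \<inter> (X \<inter> g -` A))"
    using U(1) continuous_openin_preimage_gen[OF g(1) AB(1)] by (rule openin_Int)
  have o2: "openin (top_of_set X) (V \<inter> (X \<inter> B))"
    using V(1) openin_open_Int[OF AB(2)] by (rule openin_Int)
  show ?thesis
  proof (rule that[OF o1 _ _ o2])
    show "U \<inter> (X \<inter> g -` A) \<noteq> {}" using x UX AB by auto
    show "V \<inter> (X \<inter> B) \<noteq> {}" using y VX AB by auto
  qed (use AB in auto)
qed

lemma isolated_singleton:
  fixes X :: "'a::metric_space set"
  assumes wm: "weakly_mixing_from X f 0" and q: "openin (top_of_set X) {q}"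
  shows "X = {q}"
proof (rule ccontr)
  assume "X \<noteq> {q}"
  moreover have qX: "q \<in> X" using q openin_imp_subset by blast
  ultimately obtain z where z: "z \<in> X" "z \<noteq> q" by blast
  define V where "V = X \<inter> ball z (dist z q)"
  have oV: "openin (top_of_set X) V" unfolding V_def by auto
  have zV: "z \<in> V" using z by (simp add: V_def)
  have qV: "q \<notin> V" by (simp add: V_def dist_commute)
  obtain n where "omega f 0 n ` {q} \<inter> {q} \<noteq> {}" "omega f 0 n ` {q} \<inter> V \<noteq> {}"
    using wm unfolding weakly_mixing_from_def
    by (metis q oV zV empty_iff insert_not_empty)
  then show False using qV by auto
qed

lemma wm_big:
  fixes X :: "'a::metric_space set"
  assumes wm: "weakly_mixing_from X f 0"
    and c: "\<And>n. n \<ge> 1 \<Longrightarrow> continuous_on X (f n)"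
    and s: "\<And>n. n \<ge> 1 \<Longrightarrow> f n ` X = X"
    and noiso: "\<And>q. \<not> openin (top_of_set X) {q}"
  shows "\<forall>U1 U2 V1 V2.
       openin (top_of_set X) U1 \<and> U1 \<noteq> {} \<and> openin (top_of_set X) U2 \<and> U2 \<noteq> {} \<and>
       openin (top_of_set X) V1 \<and> V1 \<noteq> {} \<and> openin (top_of_set X) V2 \<and> V2 \<noteq> {} \<longrightarrow>
       (\<exists>n>k. omega f 0 n ` U1 \<inter> V1 \<noteq> {} \<and> omega f 0 n ` U2 \<inter> V2 \<noteq> {})"
proof (induction k)
  case 0 then show ?case using wm unfolding weakly_mixing_from_def by blast
next
  case (Suc k)
  show ?case
  proof (intro allI impI)
    fix U1 U2 V1 V2 assume H: "openin (top_of_set X) U1 \<and> U1 \<noteq> {} \<and> openin (top_of_set X) U2 \<and> U2 \<noteq> {} \<and>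
       openin (top_of_set X) V1 \<and> V1 \<noteq> {} \<and> openin (top_of_set X) V2 \<and> V2 \<noteq> {}"
    have PP: "continuous_on X (omega f 0 (Suc k)) \<and> omega f 0 (Suc k) ` X = X"
      by (rule omega_props[where X=X and f=f and k=0 and n="Suc k"]) (fact c, fact s)
    have P: "continuous_on X (omega f 0 (Suc k))" "omega f 0 (Suc k) ` X \<subseteq> X"
      using PP by simp_all
    have ns: "\<And>q. V1 \<noteq> {q}" using noiso H by metis
    obtain U' V' where UV: "openin (top_of_set X) U'" "U' \<noteq> {}" "U' \<subseteq> U1"
      "openin (top_of_set X) V'" "V' \<noteq> {}" "V' \<subseteq> V1" "omega f 0 (Suc k) ` U' \<inter> V' = {}"
      using shrink[OF P, of U1 V1] H ns by metis
    obtain n where n: "n > k" "omega f 0 n ` U' \<inter> V' \<noteq> {}" "omega f 0 n ` U2 \<inter> V2 \<noteq> {}"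
    proof -
      have "openin (top_of_set X) U' \<and> U' \<noteq> {} \<and> openin (top_of_set X) U2 \<and> U2 \<noteq> {} \<and>
       openin (top_of_set X) V' \<and> V' \<noteq> {} \<and> openin (top_of_set X) V2 \<and> V2 \<noteq> {}"
        using UV H by simp
      then show ?thesis using Suc.IH[rule_format, of U' U2 V' V2] that by blast
    qed
    have "n \<noteq> Suc k" using n UV by auto
    then have "n > Suc k" using n by simp
    moreover have "omega f 0 n ` U1 \<inter> V1 \<noteq> {}" using n(2) UV by blast
    ultimately show "\<exists>n>Suc k. omega f 0 n ` U1 \<inter> V1 \<noteq> {} \<and> omega f 0 n ` U2 \<inter> V2 \<noteq> {}"
      using n by blast
  qed
qed

lemma feeble_interior:
  assumes fo: "feeble_open X f" and U: "openin (top_of_set X) U" "U \<noteq> {}"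
  shows "(top_of_set X) interior_of (omega f 0 j ` U) \<noteq> {}"
proof (induction j)
  case 0 then show ?case using U by (simp add: interior_of_openin)
next
  case (Suc j)
  define W where "W = (top_of_set X) interior_of (omega f 0 j ` U)"
  have "openin (top_of_set X) W" "W \<noteq> {}" using Suc by (auto simp: W_def)
  then have "(top_of_set X) interior_of (f (Suc j) ` W) \<noteq> {}"
    using fo unfolding feeble_open_def by auto
  moreover have "f (Suc j) ` W \<subseteq> omega f 0 (Suc j) ` U"
    using interior_of_subset[of "top_of_set X" "omega f 0 j ` U"] by (auto simp: W_def)
  ultimately show ?case using interior_of_mono by blast
qed

lemma img_split:
  assumes "k \<le> n"
  shows "omega f 0 n ` S = omega f k n ` (omega f 0 k ` S)"
  using omega_split[OF assms, of f] by (simp add: image_comp)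

theorem mainTheorem5:
  fixes X :: "'a::metric_space set" and f :: "nat \<Rightarrow> 'a \<Rightarrow> 'a" and k :: nat
  assumes "compact X"
    and "\<And>n. n \<ge> 1 \<Longrightarrow> continuous_on X (f n)"
    and "\<And>n. n \<ge> 1 \<Longrightarrow> f n ` X = X"
  shows "(weakly_mixing_from X f 0 \<longrightarrow> weakly_mixing_from X f k)
       \<and> (topologically_mixing_from X f 0 \<longrightarrow> topologically_mixing_from X f k)
       \<and> (feeble_open X f \<longrightarrow>
            (weakly_mixing_from X f k \<longrightarrow> weakly_mixing_from X f 0)
          \<and> (topologically_mixing_from X f k \<longrightarrow> topologically_mixing_from X f 0))"
proof -
  note c = assms(2) and s = assms(3)
  have props: "\<And>j m. continuous_on X (omega f j m) \<and> omega f j m ` X = X"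
    by (rule omega_props[where X=X and f=f]) (fact c, fact s)
  define P where "P = (\<lambda>U. X \<inter> omega f 0 k -` U)"
  have Popen: "openin (top_of_set X) (P U)" if "openin (top_of_set X) U" for U
  proof -
    from that[unfolded openin_open] obtain T where T: "open T" "U = X \<inter> T" by blast
    have e: "omega f 0 k ` X = X" using props[of 0 k] by (rule conjunct2)
    have im: "\<forall>x\<in>X. omega f 0 k x \<in> X"
    proof
      fix x assume "x \<in> X"
      then have "omega f 0 k x \<in> omega f 0 k ` X" by (rule imageI)
      then show "omega f 0 k x \<in> X" using e by simp
    qed
    have "P U = X \<inter> omega f 0 k -` T" using T im unfolding P_def by auto
    then show ?thesis using continuous_openin_preimage_gen[OF conjunct1[OF props] T(1)] by simp
  qed
  have Pimg: "omega f 0 k ` P U = U" if "U \<subseteq> X" for U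
  proof -
    have e: "omega f 0 k ` X = X" using props[of 0 k] by (rule conjunct2)
    show ?thesis
    proof
      show "omega f 0 k ` P U \<subseteq> U" unfolding P_def by auto
      show "U \<subseteq> omega f 0 k ` P U"
      proof
        fix y assume y: "y \<in> U"
        then have "y \<in> omega f 0 k ` X" using e that by auto
        then obtain x where x: "x \<in> X" "y = omega f 0 k x" by auto
        then have "x \<in> P U" using y unfolding P_def by simp
        then show "y \<in> omega f 0 k ` P U" using x by auto
      qed
    qed
  qed
  have Pne: "P U \<noteq> {}" if "U \<subseteq> X" "U \<noteq> {}" for U
    using Pimg[OF that(1)] that(2) by auto
  have osub: "\<And>U. openin (top_of_set X) U \<Longrightarrow> U \<subseteq> X" using openin_imp_subset by blast
  have A: "weakly_mixing_from X f k" if wm: "weakly_mixing_from X f 0"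
  proof (cases "\<exists>q. openin (top_of_set X) {q}")
    case True
    then obtain q where q: "openin (top_of_set X) {q}" by blast
    have Xq: "X = {q}" by (rule isolated_singleton[OF wm q])
    have im: "omega f k (Suc k) ` {q} = {q}" using props[of k "Suc k"] Xq by simp
    have sub: "\<And>U. openin (top_of_set X) U \<Longrightarrow> U \<noteq> {} \<Longrightarrow> U = {q}"
      using osub Xq by blast
    show ?thesis unfolding weakly_mixing_from_def
    proof (intro allI impI)
      fix U1 U2 V1 V2 assume H: "openin (top_of_set X) U1 \<and> U1 \<noteq> {} \<and> openin (top_of_set X) U2 \<and> U2 \<noteq> {} \<and>
       openin (top_of_set X) V1 \<and> V1 \<noteq> {} \<and> openin (top_of_set X) V2 \<and> V2 \<noteq> {}"
      then have "U1 = {q}" "U2 = {q}" "V1 = {q}" "V2 = {q}" using sub by metis+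
      then show "\<exists>n>k. omega f k n ` U1 \<inter> V1 \<noteq> {} \<and> omega f k n ` U2 \<inter> V2 \<noteq> {}"
        using im by (intro exI[of _ "Suc k"]) simp
    qed
  next
    case False
    have noiso: "\<And>q. \<not> openin (top_of_set X) {q}" using False by blast
    note big = wm_big[OF wm c s noiso, where k=k]
    show ?thesis unfolding weakly_mixing_from_def
    proof (intro allI impI)
      fix U1 U2 V1 V2 assume H: "openin (top_of_set X) U1 \<and> U1 \<noteq> {} \<and> openin (top_of_set X) U2 \<and> U2 \<noteq> {} \<and>
       openin (top_of_set X) V1 \<and> V1 \<noteq> {} \<and> openin (top_of_set X) V2 \<and> V2 \<noteq> {}"
      have "openin (top_of_set X) (P U1) \<and> P U1 \<noteq> {} \<and> openin (top_of_set X) (P U2) \<and> P U2 \<noteq> {} \<and>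
       openin (top_of_set X) V1 \<and> V1 \<noteq> {} \<and> openin (top_of_set X) V2 \<and> V2 \<noteq> {}"
        using H Popen Pne osub by metis
      then obtain n where n: "n > k" "omega f 0 n ` P U1 \<inter> V1 \<noteq> {}" "omega f 0 n ` P U2 \<inter> V2 \<noteq> {}"
        using big[rule_format, of "P U1" "P U2" V1 V2] by blast
      have "omega f 0 n ` P U1 = omega f k n ` U1" "omega f 0 n ` P U2 = omega f k n ` U2"
        using img_split[of k n f] n(1) Pimg H osub by (metis less_imp_le)+
      then show "\<exists>n>k. omega f k n ` U1 \<inter> V1 \<noteq> {} \<and> omega f k n ` U2 \<inter> V2 \<noteq> {}"
        using n by metis
    qed
  qed
  have B: "topologically_mixing_from X f k" if tm: "topologically_mixing_from X f 0"
    unfolding topologically_mixing_from_def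
  proof (intro allI impI)
    fix U V assume H: "openin (top_of_set X) U \<and> U \<noteq> {} \<and> openin (top_of_set X) V \<and> V \<noteq> {}"
    then have "openin (top_of_set X) (P U) \<and> P U \<noteq> {} \<and> openin (top_of_set X) V \<and> V \<noteq> {}"
      using Popen Pne osub by metis
    then obtain K where K: "\<forall>n\<ge>K. n > 0 \<longrightarrow> omega f 0 n ` P U \<inter> V \<noteq> {}"
      using tm unfolding topologically_mixing_from_def by blast
    have "\<forall>n\<ge>max K (Suc k). n > k \<longrightarrow> omega f k n ` U \<inter> V \<noteq> {}"
    proof (intro allI impI)
      fix n assume n: "max K (Suc k) \<le> n" "k < n"
      have "omega f 0 n ` P U = omega f k n ` U"
        using img_split[of k n f] n Pimg H osub by (metis less_imp_le)
      moreover have "omega f 0 n ` P U \<inter> V \<noteq> {}" using K n by simp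
      ultimately show "omega f k n ` U \<inter> V \<noteq> {}" by simp
    qed
    then show "\<exists>K. \<forall>n\<ge>K. n > k \<longrightarrow> omega f k n ` U \<inter> V \<noteq> {}" by blast
  qed
  have C: "weakly_mixing_from X f 0" if fo: "feeble_open X f" and wm: "weakly_mixing_from X f k"
    unfolding weakly_mixing_from_def
  proof (intro allI impI)
    fix U1 U2 V1 V2 assume H: "openin (top_of_set X) U1 \<and> U1 \<noteq> {} \<and> openin (top_of_set X) U2 \<and> U2 \<noteq> {} \<and>
       openin (top_of_set X) V1 \<and> V1 \<noteq> {} \<and> openin (top_of_set X) V2 \<and> V2 \<noteq> {}"
    define W where "W = (\<lambda>U. (top_of_set X) interior_of (omega f 0 k ` U))"
    have "openin (top_of_set X) (W U1) \<and> W U1 \<noteq> {} \<and> openin (top_of_set X) (W U2) \<and> W U2 \<noteq> {} \<and>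
       openin (top_of_set X) V1 \<and> V1 \<noteq> {} \<and> openin (top_of_set X) V2 \<and> V2 \<noteq> {}"
      using H feeble_interior[OF fo] unfolding W_def by simp
    then obtain n where n: "n > k" "omega f k n ` W U1 \<inter> V1 \<noteq> {}" "omega f k n ` W U2 \<inter> V2 \<noteq> {}"
      using wm[unfolded weakly_mixing_from_def, rule_format, of "W U1" "W U2" V1 V2] by blast
    have sb: "omega f k n ` W U \<subseteq> omega f 0 n ` U" for U
      unfolding W_def img_split[OF less_imp_le[OF n(1)]] by (rule image_mono[OF interior_of_subset])
    have ne: "A \<inter> V \<noteq> {}" if "A' \<inter> V \<noteq> {}" "A' \<subseteq> A" for A A' V :: "'a set"
      using that by blast
    have "omega f 0 n ` U1 \<inter> V1 \<noteq> {}" by (rule ne[OF n(2) sb])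
    moreover have "omega f 0 n ` U2 \<inter> V2 \<noteq> {}" by (rule ne[OF n(3) sb])
    ultimately show "\<exists>n>0. omega f 0 n ` U1 \<inter> V1 \<noteq> {} \<and> omega f 0 n ` U2 \<inter> V2 \<noteq> {}"
      using n(1) by (intro exI[of _ n]) simp
  qed
  have D: "topologically_mixing_from X f 0" if fo: "feeble_open X f" and tm: "topologically_mixing_from X f k"
    unfolding topologically_mixing_from_def
  proof (intro allI impI)
    fix U V assume H: "openin (top_of_set X) U \<and> U \<noteq> {} \<and> openin (top_of_set X) V \<and> V \<noteq> {}"
    define W where "W = (top_of_set X) interior_of (omega f 0 k ` U)"
    have "openin (top_of_set X) W \<and> W \<noteq> {} \<and> openin (top_of_set X) V \<and> V \<noteq> {}"
      using H feeble_interior[OF fo] unfolding W_def by simp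
    then obtain K where K: "\<forall>n\<ge>K. n > k \<longrightarrow> omega f k n ` W \<inter> V \<noteq> {}"
      using tm unfolding topologically_mixing_from_def by blast
    have "\<forall>n\<ge>max K (Suc k). n > 0 \<longrightarrow> omega f 0 n ` U \<inter> V \<noteq> {}"
    proof (intro allI impI)
      fix n assume n: "max K (Suc k) \<le> n" "0 < n"
      have "omega f k n ` W \<subseteq> omega f 0 n ` U"
        using img_split[of k n f U] n interior_of_subset[of "top_of_set X" "omega f 0 k ` U"]
        unfolding W_def by auto
      moreover have "omega f k n ` W \<inter> V \<noteq> {}" using K n by auto
      ultimately show "omega f 0 n ` U \<inter> V \<noteq> {}" by blast
    qed
    then show "\<exists>K. \<forall>n\<ge>K. n > 0 \<longrightarrow> omega f 0 n ` U \<inter> V \<noteq> {}" by blast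
  qed
  show ?thesis using A B C D by blast
qed

end
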